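(* Let $f$ be a locally integrable function and $\mu$ a (positive) measure on $\mathbb{R}_+=(0,\infty)$, and let $\sigma\in\mathbb{R}$ be such that $\int_0^\infty x^{\sigma-1}|f(x)|\,dx<\infty$ and $\int_0^\infty x^{-\sigma}\,d\mu(x)<\infty$. Assume that the integral $\int_{\sigma-i\infty}^{\sigma+i\infty}\mathcal{M}f(s)\,\mathcal{M}\mu(1-s)\,ds$ converges at least conditionally, that $x^\sigma f(x)$ is bounded, and that $f$ is continuous at $\mu$-almost every point. Then \[ \int_0^\infty f(x)\,d\mu(x)=\frac{1}{2\pi i}\int_{\sigma-i\infty}^{\sigma+i\infty}\mathcal{M}f(s)\,\mathcal{M}\mu(1-s)\,ds. \]
   Context: Mellin transforms: $\mathcal{M}f(s)=\int_0^\infty f(x)x^{s-1}\,dx$ and $\mathcal{M}\mu(s)=\int_0^\infty x^{s-1}\,d\mu(x)$, for those complex $s$ where the integrals converge absolutely. A line integral $\int_{\sigma-i\infty}^{\sigma+i\infty}g(s)\,ds$ converges conditionally if $g$ is locally integrable on the line and $\lim_{A\to\infty}\int_{\sigma-iA}^{\sigma+iA}g(s)\,ds$ exists and is finite; the integral is then defined as this limit. *)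

theory Defs
  imports "HOL-Analysis.Analysis"
begin

definition mellin :: "(real \<Rightarrow> complex) \<Rightarrow> complex \<Rightarrow> complex" where
  "mellin f s = (LINT x:{0<..}|lebesgue. (complex_of_real x) powr (s - 1) * f x)"

definition mellin_measure :: "real measure \<Rightarrow> complex \<Rightarrow> complex" where
  "mellin_measure \<mu> s = (LINT x:{0<..}|\<mu>. (complex_of_real x) powr (s - 1))"

text \<open>Integrand of the line integral along Re s = sigma, parametrised s = sigma + i t,
  ds = i dt.\<close>
definition mellin_line_integrand :: "(real \<Rightarrow> complex) \<Rightarrow> real measure \<Rightarrow> real \<Rightarrow> real \<Rightarrow> complex" where
  "mellin_line_integrand f \<mu> \<sigma> t =
     \<i> * (mellin f (complex_of_real \<sigma> + \<i> * complex_of_real t) *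
          mellin_measure \<mu> (1 - (complex_of_real \<sigma> + \<i> * complex_of_real t)))"

end

theory Submission
  imports Defs "HOL-Probability.Probability" "HOL-Real_Asymp.Real_Asymp"
begin

lemma gauss_ft:
  fixes T x :: real assumes T: "T > 0"
  shows "integrable lborel (\<lambda>t. exp (-((t/T)^2)/2) *\<^sub>R iexp (t* x))"
    and "(LINT t|lborel. exp (-((t/T)^2)/2) *\<^sub>R iexp (t* x)) = complex_of_real (T * sqrt (2* pi) * exp (-((T* x)^2)/2))"
proof -
  have m: "(\<lambda>t. exp (-((t/T)^2)/2) *\<^sub>R iexp (t* x)) \<in> borel_measurable borel" by measurable
  have int0: "integrable lborel (\<lambda>s. std_normal_density s *\<^sub>R iexp (s * a))" for a
  proof -
    interpret real_distribution std_normal_distribution by (rule real_dist_normal_dist)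
    have "integrable std_normal_distribution (\<lambda>s. iexp (s * a))"
      by (rule integrable_const_bound[where B=1]) auto
    then show ?thesis
      by (subst (asm) integrable_density) (auto simp: normal_density_nonneg)
  qed
  have ch: "(LINT s|lborel. std_normal_density s *\<^sub>R iexp (a * s)) = exp (-(a^2)/2)" for a
  proof -
    have "char std_normal_distribution a = exp (-(a^2)/2)"
      by (simp add: char_std_normal_distribution)
    then show ?thesis unfolding char_def
      by (subst (asm) integral_density) (auto simp: normal_density_nonneg)
  qed
  have eq: "exp (-(((T * s)/T)^2)/2) *\<^sub>R iexp ((T * s)* x) = sqrt (2* pi) *\<^sub>R (std_normal_density s *\<^sub>R iexp (s * (T* x)))" for s
    using T by (simp add: std_normal_density_def mult_ac)
  have int1: "integrable lborel (\<lambda>s. exp (-(((T * s)/T)^2)/2) *\<^sub>R iexp ((T * s)* x))"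
    unfolding eq using int0[of "T* x", THEN integrable_scaleR_right[where c="sqrt (2* pi)"]] by simp
  show "integrable lborel (\<lambda>t. exp (-((t/T)^2)/2) *\<^sub>R iexp (t* x))"
    using lborel_integrable_real_affine_iff[of T "\<lambda>t. exp (-((t/T)^2)/2) *\<^sub>R iexp (t* x)" 0] int1 T
    by simp
  have "(LINT t|lborel. exp (-((t/T)^2)/2) *\<^sub>R iexp (t* x)) = \<bar>T\<bar> *\<^sub>R (LINT s|lborel. exp (-(((T * s)/T)^2)/2) *\<^sub>R iexp ((T * s)* x))"
    using lborel_integral_real_affine[of T "\<lambda>t. exp (-((t/T)^2)/2) *\<^sub>R iexp (t* x)" 0] T by simp
  also have "\<dots> = T *\<^sub>R (sqrt (2* pi) *\<^sub>R (LINT s|lborel. std_normal_density s *\<^sub>R iexp ((T* x) * s)))"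
    unfolding eq integral_scaleR_right abs_of_pos[OF T] by (simp add: mult_ac)
  also have "\<dots> = complex_of_real (T * sqrt (2* pi) * exp (-((T* x)^2)/2))"
    unfolding ch by (simp add: scaleR_conv_of_real)
  finally show "(LINT t|lborel. exp (-((t/T)^2)/2) *\<^sub>R iexp (t* x)) = complex_of_real (T * sqrt (2* pi) * exp (-((T* x)^2)/2))" .
qed

lemma gauss_int:
  fixes T :: real assumes T: "T > 0"
  shows "integrable lborel (\<lambda>t. exp (-((t/T)^2)/2))"
  using gauss_ft(1)[OF T, of 0] integrable_norm by fastforce

lemma fub1:
  fixes g :: "real \<Rightarrow> complex" and T v :: real
  assumes gm[measurable]: "g \<in> borel_measurable borel" and gi: "integrable lborel g" and T: "T > 0"
  shows "integrable lborel (\<lambda>t. exp (-((t/T)^2)/2) *\<^sub>R ((LINT u|lborel. g u * iexp (t* u)) * iexp (-(t* v))))"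
    and "(LINT t|lborel. exp (-((t/T)^2)/2) *\<^sub>R ((LINT u|lborel. g u * iexp (t* u)) * iexp (-(t* v))))
       = complex_of_real (2* pi) * (LINT s|lborel. g (v + s/T) * complex_of_real (std_normal_density s))"
proof -
  define F where "F = (\<lambda>(t,u). exp (-((t/T)^2)/2) *\<^sub>R (g u * iexp (t*(u-v))))"
  have Fm[measurable]: "F \<in> borel_measurable (lborel \<Otimes>\<^sub>M lborel)" unfolding F_def by measurable
  have int: "integrable (lborel \<Otimes>\<^sub>M lborel) F"
  proof (rule lborel_pair.Fubini_integrable)
    have "(\<lambda>t. LINT u|lborel. norm (F (t,u))) = (\<lambda>t. exp (-((t/T)^2)/2) * (LINT u|lborel. norm (g u)))"
      by (auto simp: F_def norm_mult)
    then show "integrable lborel (\<lambda>t. LINT u|lborel. norm (F (t,u)))"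
      using gauss_int[OF T] by (simp add: integrable_mult_left)
    show "AE t in lborel. integrable lborel (\<lambda>u. F (t,u))"
    proof (rule AE_I2)
      fix t
      show "integrable lborel (\<lambda>u. F (t,u))" unfolding F_def
        by (simp, rule integrable_scaleR_right, rule Bochner_Integration.integrable_bound[where f="\<lambda>u. norm (g u)"])
           (auto simp: gi norm_mult)
    qed
  qed fact
  have inner: "(LINT u|lborel. g u * iexp (t* u)) * iexp (-(t* v)) = (LINT u|lborel. g u * iexp (t*(u-v)))" for t
    by (simp add: exp_diff exp_minus field_simps right_diff_distrib flip: integral_mult_left_zero)
  show "integrable lborel (\<lambda>t. exp (-((t/T)^2)/2) *\<^sub>R ((LINT u|lborel. g u * iexp (t* u)) * iexp (-(t* v))))"
    unfolding inner using lborel_pair.integrable_fst'[OF int] by (simp add: F_def)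
  have "(LINT t|lborel. exp (-((t/T)^2)/2) *\<^sub>R ((LINT u|lborel. g u * iexp (t * u)) * iexp (-(t * v))))
     = (LINT t|lborel. LINT u|lborel. F (t,u))"
    unfolding inner F_def by simp
  also have "\<dots> = (LINT u|lborel. LINT t|lborel. F (t,u))"
    using lborel_pair.Fubini_integral[of "\<lambda>t u. F (t,u)"] int by simp
  also have "\<dots> = (LINT u|lborel. g u * complex_of_real (T * sqrt (2*pi) * exp (-((T*(u-v))^2)/2)))"
  proof (intro Bochner_Integration.integral_cong refl)
    fix u
    have "(LINT t|lborel. F (t,u)) = (LINT t|lborel. g u * (exp (-((t/T)^2)/2) *\<^sub>R iexp (t * (u-v))))"
      unfolding F_def by (simp add: mult_ac)
    also have "\<dots> = g u * (LINT t|lborel. exp (-((t/T)^2)/2) *\<^sub>R iexp (t * (u-v)))"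
      by (rule integral_mult_right_zero)
    also have "\<dots> = g u * complex_of_real (T * sqrt (2*pi) * exp (-((T*(u-v))^2)/2))"
      by (simp only: gauss_ft(2)[OF T])
    finally show "(LINT t|lborel. F (t,u)) = g u * complex_of_real (T * sqrt (2*pi) * exp (-((T*(u-v))^2)/2))" .
  qed
  also have "\<dots> = \<bar>1/T\<bar> *\<^sub>R (LINT s|lborel. g (v + 1/T * s) * complex_of_real (T * sqrt (2*pi) * exp (-((T*((v + 1/T * s)-v))^2)/2)))"
    by (rule lborel_integral_real_affine) (use T in simp)
  also have "\<dots> = complex_of_real (2*pi) * (LINT s|lborel. g (v + s/T) * complex_of_real (std_normal_density s))"
  proof -
    have e: "complex_of_real (T * sqrt (2*pi) * exp (-((T*((v + 1/T * s)-v))^2)/2)) = complex_of_real T * (complex_of_real (2*pi) * complex_of_real (std_normal_density s))" for s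
    proof -
      have "T * sqrt (2*pi) * exp (-((T*((v + 1/T * s)-v))^2)/2) = T * (2*pi * std_normal_density s)"
        using T by (simp add: std_normal_density_def field_simps real_sqrt_mult)
      then show ?thesis by (simp only: of_real_mult)
    qed
    show ?thesis using T unfolding e
      by (simp add: scaleR_conv_of_real mult_ac field_simps flip: integral_mult_right_zero)
  qed
  finally show "(LINT t|lborel. exp (-((t/T)^2)/2) *\<^sub>R ((LINT u|lborel. g u * iexp (t * u)) * iexp (-(t * v))))
       = complex_of_real (2*pi) * (LINT s|lborel. g (v + s/T) * complex_of_real (std_normal_density s))" .
qed

lemma fub2:
  fixes g :: "real \<Rightarrow> complex" and T :: real and \<rho> :: "real measure" and \<phi> :: "real \<Rightarrow> real"
  assumes gm[measurable]: "g \<in> borel_measurable borel" and gi: "integrable lborel g" and T: "T > 0"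
    and s\<rho>[measurable_cong]: "sets \<rho> = sets borel" and fin: "finite_measure \<rho>"
    and \<phi>m[measurable]: "\<phi> \<in> borel_measurable borel"
  shows "(LINT t|lborel. exp (-((t/T)^2)/2) *\<^sub>R ((LINT u|lborel. g u * iexp (t * u)) * (LINT y|\<rho>. iexp (-(t * \<phi> y)))))
     = complex_of_real (2*pi) * (LINT y|\<rho>. LINT s|lborel. g (\<phi> y + s/T) * complex_of_real (std_normal_density s))"
proof -
  interpret \<rho>: finite_measure \<rho> by (rule fin)
  interpret P2: pair_sigma_finite lborel \<rho> ..
  define G where "G t = (LINT u|lborel. g u * iexp (t * u))" for t
  define N where "N = (LINT u|lborel. norm (g u))"
  have Gm[measurable]: "G \<in> borel_measurable borel"
    unfolding G_def by (rule lborel.borel_measurable_lebesgue_integral) simp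
  have GN: "norm (G t) \<le> N" for t
  proof -
    have "norm (G t) \<le> (LINT u|lborel. norm (g u * iexp (t * u)))"
      unfolding G_def by (rule integral_norm_bound)
    also have "\<dots> = N" unfolding N_def by (simp add: norm_mult)
    finally show ?thesis .
  qed
  define F where "F = (\<lambda>(t,y). exp (-((t/T)^2)/2) *\<^sub>R (G t * iexp (-(t * \<phi> y))))"
  have Fm[measurable]: "F \<in> borel_measurable (lborel \<Otimes>\<^sub>M \<rho>)" unfolding F_def by measurable
  have int: "integrable (lborel \<Otimes>\<^sub>M \<rho>) F"
  proof (rule P2.Fubini_integrable)
    have "(\<lambda>t. LINT y|\<rho>. norm (F (t,y))) = (\<lambda>t. (exp (-((t/T)^2)/2) * norm (G t)) * measure \<rho> (space \<rho>))"
      by (auto simp: F_def norm_mult)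
    moreover have "integrable lborel (\<lambda>t. exp (-((t/T)^2)/2) * norm (G t))"
    proof (rule Bochner_Integration.integrable_bound)
      show "integrable lborel (\<lambda>t. exp (-((t/T)^2)/2) * N)"
        using gauss_int[OF T] by (rule integrable_mult_left)
      show "AE t in lborel. norm (exp (-((t/T)^2)/2) * norm (G t)) \<le> norm (exp (-((t/T)^2)/2) * N)"
        using GN by (auto intro!: AE_I2 mult_left_mono simp: abs_mult order_trans[OF _ GN])
    qed measurable
    ultimately show "integrable lborel (\<lambda>t. LINT y|\<rho>. norm (F (t,y)))" by simp
    show "AE t in lborel. integrable \<rho> (\<lambda>y. F (t,y))"
      by (intro AE_I2 \<rho>.integrable_const_bound[where B="exp (-((t/T)^2)/2) * N" for t])
         (auto simp: F_def norm_mult intro!: mult_left_mono GN)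
  qed fact
  have "(LINT t|lborel. exp (-((t/T)^2)/2) *\<^sub>R ((LINT u|lborel. g u * iexp (t * u)) * (LINT y|\<rho>. iexp (-(t * \<phi> y)))))
     = (LINT t|lborel. LINT y|\<rho>. F (t,y))"
    unfolding F_def G_def by (simp flip: integral_mult_right_zero)
  also have "\<dots> = (LINT y|\<rho>. LINT t|lborel. F (t,y))"
    using P2.Fubini_integral[of "\<lambda>t y. F (t,y)"] int by simp
  also have "\<dots> = (LINT y|\<rho>. complex_of_real (2*pi) * (LINT s|lborel. g (\<phi> y + s/T) * complex_of_real (std_normal_density s)))"
    by (intro Bochner_Integration.integral_cong refl) (simp only: F_def G_def fub1(2)[OF gm gi T] case_prod_conv)
  also have "\<dots> = complex_of_real (2*pi) * (LINT y|\<rho>. LINT s|lborel. g (\<phi> y + s/T) * complex_of_real (std_normal_density s))"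
    by (rule integral_mult_right_zero)
  finally show ?thesis .
qed
lemma abel:
  fixes h :: "real \<Rightarrow> complex" and M :: real
  assumes hm[measurable]: "h \<in> borel_measurable borel" and hb: "\<And>t. norm (h t) \<le> M"
    and lim: "((\<lambda>A. LINT t:{-A..A}|lborel. h t) \<longlongrightarrow> L) at_top"
  shows "((\<lambda>T. LINT t|lborel. exp (-((t/T)^2)/2) *\<^sub>R h t) \<longlongrightarrow> L) at_top"
proof -
  define f where "f r = r * exp (-(r^2)/2)" for r::real
  define p where "p r = indicator {0..} r * f r" for r::real
  define P where "P = density lborel (\<lambda>r. ennreal (p r))"
  have fm[measurable]: "f \<in> borel_measurable borel" unfolding f_def by measurable
  have pm[measurable]: "p \<in> borel_measurable borel" unfolding p_def by measurable
  have sP[measurable_cong]: "sets P = sets borel" unfolding P_def by simp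
  have spP: "space P = UNIV" unfolding P_def by simp
  have M0: "0 \<le> M" using hb[of 0] norm_ge_zero order_trans by blast
  have tail: "emeasure P {c..} = ennreal (exp (-(c^2)/2))" if c: "c \<ge> 0" for c
  proof -
    have "emeasure P {c..} = (\<integral>\<^sup>+r. ennreal (p r) * indicator {c..} r \<partial>lborel)"
      unfolding P_def by (subst emeasure_density) auto
    also have "\<dots> = (\<integral>\<^sup>+r. ennreal (f r) * indicator {c..} r \<partial>lborel)"
      using c by (intro nn_integral_cong) (auto simp: p_def indicator_def)
    also have "\<dots> = ennreal (0 - (- exp (-(c^2)/2)))"
    proof (rule nn_integral_FTC_atLeast)
      show "DERIV (\<lambda>r. - exp (-(r^2)/2)) x :> f x" for x
        unfolding f_def by (auto intro!: derivative_eq_intros)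
      show "0 \<le> f x" if "c \<le> x" for x using that c unfolding f_def by auto
      show "((\<lambda>r::real. - exp (-(r^2)/2)) \<longlongrightarrow> 0) at_top" by real_asymp
    qed measurable
    finally show ?thesis by simp
  qed
  have "emeasure P UNIV = (\<integral>\<^sup>+r. ennreal (p r) * indicator UNIV r \<partial>lborel)"
    unfolding P_def by (subst emeasure_density) auto
  also have "\<dots> = (\<integral>\<^sup>+r. ennreal (p r) * indicator {0..} r \<partial>lborel)"
    by (intro nn_integral_cong) (auto simp: p_def indicator_def)
  also have "\<dots> = emeasure P {0..}"
    unfolding P_def by (subst emeasure_density) auto
  also have "\<dots> = 1" using tail[of 0] by simp
  finally have "emeasure P UNIV = 1" .
  then interpret P: prob_space P by (intro prob_spaceI) (simp add: spP)
  have mtail: "measure P {c..} = exp (-(c^2)/2)" if "c \<ge> 0" for c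
    using tail[OF that] by (simp add: measure_def)
  have weight: "(LINT r|P. indicator {-(r*T)..r*T} t) = exp (-((t/T)^2)/2)" if T: "T > 0" for T t
  proof -
    have "(\<lambda>r. indicator {-(r*T)..r*T} t :: real) = indicator {\<bar>t\<bar>/T..}"
    proof
      fix r show "indicator {-(r*T)..r*T} t = (indicator {\<bar>t\<bar>/T..} r :: real)"
        using T by (auto simp: indicator_def divide_le_eq abs_le_iff mult.commute)
    qed
    then have "(LINT r|P. indicator {-(r*T)..r*T} t) = measure P {\<bar>t\<bar>/T..}"
      by simp
    also have "\<dots> = exp (-((t/T)^2)/2)" using T by (subst mtail) (auto simp: power_divide)
    finally show ?thesis .
  qed
  define H where "H s = (LINT t|lborel. indicator {-s..s} t *\<^sub>R h t)" for s
  have Hm[measurable]: "(\<lambda>(r,t). indicator {-(r*T)..r*T} t *\<^sub>R h t) \<in> borel_measurable (P \<Otimes>\<^sub>M lborel)" for T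
  proof -
    have "(\<lambda>(r,t). indicator {-(r*T)..r*T} t *\<^sub>R h t) = (\<lambda>(r::real,t). of_bool (-(r*T) \<le> t \<and> t \<le> r*T) *\<^sub>R h t)"
      by (auto simp: indicator_def)
    then show ?thesis by simp
  qed
  have intI: "integrable lborel (\<lambda>t. indicator {-s..s} t *\<^sub>R h t)" for s
  proof (rule Bochner_Integration.integrable_bound)
    show "integrable lborel (\<lambda>t. indicator {-s..s} t * M)"
      by (intro integrable_mult_left integrable_real_indicator) (auto simp: emeasure_lborel_Icc_eq)
    show "AE t in lborel. norm (indicator {-s..s} t *\<^sub>R h t) \<le> norm (indicator {-s..s} t * M)"
      using hb M0 by (auto simp: indicator_def)
  qed measurable
  have Nb: "(LINT t|lborel. norm (indicator {-s..s} t *\<^sub>R h t)) \<le> M * (2 * \<bar>s\<bar>)" for s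
  proof -
    have "(LINT t|lborel. norm (indicator {-s..s} t *\<^sub>R h t)) \<le> (LINT t|lborel. indicator {-s..s} t * M)"
    proof (rule integral_mono)
      show "integrable lborel (\<lambda>t. norm (indicator {-s..s} t *\<^sub>R h t))"
        using intI by (rule integrable_norm)
      show "integrable lborel (\<lambda>t. indicator {-s..s} t * M)"
        by (intro integrable_mult_left integrable_real_indicator) (auto simp: emeasure_lborel_Icc_eq)
    qed (use hb in \<open>auto simp: indicator_def\<close>)
    also have "\<dots> = measure lborel {-s..s} * M" by simp
    also have "\<dots> \<le> M * (2 * \<bar>s\<bar>)" using M0 by (auto simp: measure_lborel_Icc mult_nonneg_nonpos)
    finally show ?thesis .
  qed
  have Hb0: "norm (H s) \<le> M * (2 * \<bar>s\<bar>)" for s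
    using integral_norm_bound[of lborel "\<lambda>t. indicator {-s..s} t *\<^sub>R h t"] Nb[of s]
    unfolding H_def by linarith
  have HL: "(H \<longlongrightarrow> L) at_top" using lim unfolding H_def set_lebesgue_integral_def .
  obtain S0 where S0: "\<And>s. s \<ge> S0 \<Longrightarrow> norm (H s - L) < 1"
    using HL[THEN tendstoD, of 1] by (auto simp: eventually_at_top_linorder dist_norm)
  define B where "B = max (M * (2 * \<bar>S0\<bar>)) (norm L + 1)"
  have HB: "norm (H s) \<le> B" if "s \<ge> 0" for s
  proof (cases "s \<ge> S0")
    case True
    then have "norm (H s) \<le> norm L + norm (H s - L)" by (metis norm_triangle_sub add.commute)
    with S0[OF True] show ?thesis unfolding B_def by linarith
  next
    case False
    then have "M * (2 * \<bar>s\<bar>) \<le> M * (2 * \<bar>S0\<bar>)" using that M0 by (intro mult_left_mono) auto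
    with Hb0[of s] show ?thesis unfolding B_def by linarith
  qed
  have Hmeas[measurable]: "H \<in> borel_measurable borel"
  proof -
    have "(\<lambda>(s,t). indicator {-s..s} t *\<^sub>R h t) = (\<lambda>(s::real,t). of_bool (-s \<le> t \<and> t \<le> s) *\<^sub>R h t)"
      by (auto simp: indicator_def)
    then have "(\<lambda>(s,t). indicator {-s..s} t *\<^sub>R h t) \<in> borel_measurable (borel \<Otimes>\<^sub>M lborel)"
      by simp
    then show ?thesis unfolding H_def using lborel.borel_measurable_lebesgue_integral[of "\<lambda>s t. indicator {-s..s} t *\<^sub>R h t" borel] by simp
  qed
  have rint: "integrable P (\<lambda>r. r)"
  proof -
    have "integrable lborel (\<lambda>r. p r *\<^sub>R r)"
    proof (rule Bochner_Integration.integrable_bound)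
      show "integrable lborel (\<lambda>r. sqrt (2*pi) * (std_normal_density r * r^2))"
        by (intro integrable_mult_right integrable_std_normal_moment)
      show "AE r in lborel. norm (p r *\<^sub>R r) \<le> norm (sqrt (2*pi) * (std_normal_density r * r^2))"
        by (auto simp: p_def f_def std_normal_density_def indicator_def power2_eq_square abs_mult)
    qed measurable
    then show ?thesis unfolding P_def
      by (subst integrable_density) (auto simp: p_def f_def indicator_def intro!: AE_I2)
  qed
  interpret PL: pair_sigma_finite P lborel ..
  have ppos: "AE r in P. 0 < p r" unfolding P_def by (subst AE_density) auto
  have fub: "(LINT t|lborel. exp (-((t/T)^2)/2) *\<^sub>R h t) = (LINT r|P. H (r*T))" if T: "T > 0" for T
  proof -
    have int: "integrable (P \<Otimes>\<^sub>M lborel) (\<lambda>(r,t). indicator {-(r*T)..r*T} t *\<^sub>R h t)"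
    proof (rule PL.Fubini_integrable)
      show "integrable P (\<lambda>r. LINT t|lborel. norm (case (r, t) of (r,t) \<Rightarrow> indicator {-(r*T)..r*T} t *\<^sub>R h t))"
      proof (rule Bochner_Integration.integrable_bound)
        show "integrable P (\<lambda>r. M * (2 * T) * r)" using rint by (rule integrable_mult_right)
        show "(\<lambda>r. LINT t|lborel. norm (case (r, t) of (r,t) \<Rightarrow> indicator {-(r*T)..r*T} t *\<^sub>R h t)) \<in> borel_measurable P"
        proof (rule lborel.borel_measurable_lebesgue_integral)
          have "(\<lambda>(r,t). norm (indicator {-(r*T)..r*T} t *\<^sub>R h t)) = (\<lambda>(r::real,t). of_bool (-(r*T) \<le> t \<and> t \<le> r*T) * norm (h t))"
            by (auto simp: indicator_def)
          then show "(\<lambda>(r,t). norm (case (r, t) of (r,t) \<Rightarrow> indicator {-(r*T)..r*T} t *\<^sub>R h t)) \<in> borel_measurable (P \<Otimes>\<^sub>M lborel)"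
            by simp
        qed
        show "AE r in P. norm (LINT t|lborel. norm (case (r, t) of (r,t) \<Rightarrow> indicator {-(r*T)..r*T} t *\<^sub>R h t)) \<le> norm (M * (2 * T) * r)"
          using ppos
        proof eventually_elim
            fix r assume "0 < p r"
            then have r: "r \<ge> 0" by (cases "r \<ge> 0") (auto simp: p_def indicator_def)
            have "norm (LINT t|lborel. norm (indicator {-(r*T)..r*T} t *\<^sub>R h t)) = (LINT t|lborel. norm (indicator {-(r*T)..r*T} t *\<^sub>R h t))"
              by (simp add: integral_nonneg_AE)
            also have "\<dots> \<le> M * (2 * \<bar>r*T\<bar>)" by (rule Nb)
            also have "\<dots> = norm (M * (2 * T) * r)" using r T M0 by (simp add: abs_mult)
            finally show "norm (LINT t|lborel. norm (case (r, t) of (r,t) \<Rightarrow> indicator {-(r*T)..r*T} t *\<^sub>R h t)) \<le> norm (M * (2 * T) * r)" by simp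
        qed
      qed
      show "AE r in P. integrable lborel (\<lambda>t. case (r, t) of (r,t) \<Rightarrow> indicator {-(r*T)..r*T} t *\<^sub>R h t)"
        using intI by simp
    qed (rule Hm)
    have "(LINT t|lborel. exp (-((t/T)^2)/2) *\<^sub>R h t) = (LINT t|lborel. LINT r|P. indicator {-(r*T)..r*T} t *\<^sub>R h t)"
    proof (intro Bochner_Integration.integral_cong refl)
      fix t
      have "integrable P (\<lambda>r. of_bool (-(r*T) \<le> t \<and> t \<le> r*T) :: real)"
        by (rule P.integrable_const_bound[where B=1]) auto
      then have "integrable P (\<lambda>r. indicator {-(r*T)..r*T} t :: real)"
        by (simp add: indicator_def)
      then show "exp (-((t/T)^2)/2) *\<^sub>R h t = (LINT r|P. indicator {-(r*T)..r*T} t *\<^sub>R h t)"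
        unfolding weight[OF T, symmetric] by simp
    qed
    also have "\<dots> = (LINT r|P. LINT t|lborel. indicator {-(r*T)..r*T} t *\<^sub>R h t)"
      by (rule PL.Fubini_integral) (use int in simp)
    also have "\<dots> = (LINT r|P. H (r*T))" unfolding H_def ..
    finally show ?thesis .
  qed
  have "((\<lambda>T. LINT r|P. H (r*T)) \<longlongrightarrow> (LINT r|P. L)) at_top"
  proof (rule integral_dominated_convergence_at_top[where w="\<lambda>_. B"])
    show "integrable P (\<lambda>_. B)" by simp
    have "AE r in P. 0 < r"
      unfolding P_def by (subst AE_density) (auto simp: p_def indicator_def f_def intro!: AE_I2 elim: le_neq_trans)
    then show "AE r in P. ((\<lambda>T. H (r*T)) \<longlongrightarrow> L) at_top"
    proof eventually_elim
      case (elim r)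
      have "filterlim (\<lambda>T. r*T) at_top at_top"
        using elim by (intro filterlim_tendsto_pos_mult_at_top[OF tendsto_const]) (auto simp: filterlim_ident)
      then show ?case using HL by (rule filterlim_compose[rotated])
    qed
    have "AE r in P. 0 \<le> r"
      unfolding P_def by (subst AE_density) (auto simp: p_def indicator_def f_def)
    note nn = this
    show "\<forall>\<^sub>F T in at_top. AE r in P. norm (H (r*T)) \<le> B"
      using eventually_ge_at_top[of "0::real"]
    proof eventually_elim
      case (elim T)
      show ?case using nn by eventually_elim (use elim in \<open>auto intro!: HB\<close>)
    qed
  qed measurable
  then have "((\<lambda>T. LINT r|P. H (r*T)) \<longlongrightarrow> L) at_top"
    by (simp add: P.prob_space)
  then show ?thesis
  proof (rule Lim_transform_eventually)
    show "\<forall>\<^sub>F T in at_top. (LINT r|P. H (r*T)) = (LINT t|lborel. exp (-((t/T)^2)/2) *\<^sub>R h t)"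
      using eventually_gt_at_top[of "0::real"] by (rule eventually_mono) (rule fub[symmetric])
  qed
qed
lemma std_normal_int_lebesgue: "integrable lebesgue std_normal_density" "(LINT s|lebesgue. std_normal_density s) = 1"
  by (simp_all add: integrable_completion integral_completion)

lemma kern_bound:
  fixes gt :: "real \<Rightarrow> complex"
  assumes gtm[measurable]: "gt \<in> borel_measurable borel" and gtb: "\<And>u. norm (gt u) \<le> C"
  shows "integrable lborel (\<lambda>s. gt (v + s/T) * complex_of_real (std_normal_density s))"
    and "norm (LINT s|lborel. gt (v + s/T) * complex_of_real (std_normal_density s)) \<le> C"
proof -
  have C0: "0 \<le> C" using gtb[of 0] norm_ge_zero order_trans by blast
  show int: "integrable lborel (\<lambda>s. gt (v + s/T) * complex_of_real (std_normal_density s))"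
  proof (rule Bochner_Integration.integrable_bound)
    show "integrable lborel (\<lambda>s. C * std_normal_density s)" by (intro integrable_mult_right) simp
    show "AE s in lborel. norm (gt (v + s/T) * complex_of_real (std_normal_density s)) \<le> norm (C * std_normal_density s)"
      using gtb C0 by (auto intro!: AE_I2 mult_right_mono simp: norm_mult normal_density_nonneg)
  qed measurable
  have "norm (LINT s|lborel. gt (v + s/T) * complex_of_real (std_normal_density s)) \<le> (LINT s|lborel. norm (gt (v + s/T) * complex_of_real (std_normal_density s)))"
    by (rule integral_norm_bound)
  also have "\<dots> \<le> (LINT s|lborel. C * std_normal_density s)"
    using int gtb by (intro integral_mono integrable_norm) (auto intro!: mult_right_mono simp: norm_mult normal_density_nonneg)
  also have "\<dots> = C" by simp
  finally show "norm (LINT s|lborel. gt (v + s/T) * complex_of_real (std_normal_density s)) \<le> C" .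
qed

lemma approx_id:
  fixes g gt :: "real \<Rightarrow> complex"
  assumes gl[measurable]: "g \<in> borel_measurable lebesgue" and gtm[measurable]: "gt \<in> borel_measurable borel"
    and ae: "AE u in lebesgue. gt u = g u" and gb: "\<And>u. norm (g u) \<le> C" and gtb: "\<And>u. norm (gt u) \<le> C"
    and cont: "isCont g v"
  shows "((\<lambda>T. LINT s|lborel. gt (v + s/T) * complex_of_real (std_normal_density s)) \<longlongrightarrow> g v) at_top"
proof -
  have C0: "0 \<le> C" using gtb[of 0] norm_ge_zero order_trans by blast
  have aff: "(LINT s|lebesgue. h (v + s/T) * complex_of_real (std_normal_density s))
       = (LINT u|lebesgue. h u * complex_of_real (T * std_normal_density (T * (u - v))))" if T: "T > 0" for T and h :: "real \<Rightarrow> complex"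
  proof -
    have "(LINT u|lebesgue. h u * complex_of_real (T * std_normal_density (T * (u - v))))
        = \<bar>1/T\<bar> *\<^sub>R (LINT s|lebesgue. h (v + 1/T * s) * complex_of_real (T * std_normal_density (T * ((v + 1/T * s) - v))))"
      by (rule lebesgue_integral_real_affine) (use T in simp)
    also have "\<dots> = (LINT s|lebesgue. h (v + s/T) * complex_of_real (std_normal_density s))"
      using T by (simp add: scaleR_conv_of_real field_simps flip: integral_mult_right_zero)
    finally show ?thesis ..
  qed
  have eq: "(LINT s|lborel. gt (v + s/T) * complex_of_real (std_normal_density s))
      = (LINT s|lebesgue. g (v + s/T) * complex_of_real (std_normal_density s))" if T: "T > 0" for T
  proof -
    have "(LINT s|lborel. gt (v + s/T) * complex_of_real (std_normal_density s))
       = (LINT s|lebesgue. gt (v + s/T) * complex_of_real (std_normal_density s))"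
      by (rule integral_completion[symmetric]) measurable
    also have "\<dots> = (LINT u|lebesgue. gt u * complex_of_real (T * std_normal_density (T * (u - v))))"
      by (rule aff[OF T])
    also have "\<dots> = (LINT u|lebesgue. g u * complex_of_real (T * std_normal_density (T * (u - v))))"
    proof (rule integral_cong_AE)
      show "(\<lambda>u. gt u * complex_of_real (T * std_normal_density (T * (u - v)))) \<in> borel_measurable lebesgue"
        by (intro measurable_completion) simp
      have "(\<lambda>u. complex_of_real (T * std_normal_density (T * (u - v)))) \<in> borel_measurable lebesgue"
        by (intro measurable_completion) simp
      then show "(\<lambda>u. g u * complex_of_real (T * std_normal_density (T * (u - v)))) \<in> borel_measurable lebesgue"
        using gl by (rule borel_measurable_times[rotated])
      show "AE u in lebesgue. gt u * complex_of_real (T * std_normal_density (T * (u - v))) = g u * complex_of_real (T * std_normal_density (T * (u - v)))"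
        using ae by eventually_elim simp
    qed
    also have "\<dots> = (LINT s|lebesgue. g (v + s/T) * complex_of_real (std_normal_density s))"
      by (rule aff[OF T, symmetric])
    finally show ?thesis .
  qed
  have mg: "(\<lambda>s. g (v + s/T) * complex_of_real (std_normal_density s)) \<in> borel_measurable lebesgue" for T
  proof (cases "T = 0")
    case True then show ?thesis by (simp, intro borel_measurable_times measurable_completion) auto
  next
    case False
    have "(\<lambda>s. g (v + (1/T) *\<^sub>R s)) \<in> borel_measurable lebesgue"
      by (rule borel_measurable_affine[OF gl]) (use False in simp)
    then have "(\<lambda>s. g (v + s/T)) \<in> borel_measurable lebesgue" by simp
    moreover have "(\<lambda>s. complex_of_real (std_normal_density s)) \<in> borel_measurable lebesgue"
      by (intro measurable_completion) simp
    ultimately show ?thesis by (rule borel_measurable_times)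
  qed
  have "((\<lambda>T. LINT s|lebesgue. g (v + s/T) * complex_of_real (std_normal_density s)) \<longlongrightarrow> (LINT s|lebesgue. g v * complex_of_real (std_normal_density s))) at_top"
  proof (rule integral_dominated_convergence_at_top[where w="\<lambda>s. C * std_normal_density s"])
    show "integrable lebesgue (\<lambda>s. C * std_normal_density s)"
      using std_normal_int_lebesgue(1) by (rule integrable_mult_right)
    show "(\<lambda>s. g v * complex_of_real (std_normal_density s)) \<in> borel_measurable lebesgue"
      by (intro borel_measurable_times measurable_completion) auto
    show "(\<lambda>s. g (v + s/T) * complex_of_real (std_normal_density s)) \<in> borel_measurable lebesgue" for T
      by (rule mg)
    show "AE s in lebesgue. ((\<lambda>T. g (v + s/T) * complex_of_real (std_normal_density s)) \<longlongrightarrow> g v * complex_of_real (std_normal_density s)) at_top"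
    proof (rule AE_I2)
      fix s
      have "((\<lambda>T. v + s/T) \<longlongrightarrow> v) at_top" by real_asymp
      then have "((\<lambda>T. g (v + s/T)) \<longlongrightarrow> g v) at_top" using cont by (rule isCont_tendsto_compose[rotated])
      then show "((\<lambda>T. g (v + s/T) * complex_of_real (std_normal_density s)) \<longlongrightarrow> g v * complex_of_real (std_normal_density s)) at_top"
        by (intro tendsto_mult tendsto_const)
    qed
    show "\<forall>\<^sub>F T in at_top. AE s in lebesgue. norm (g (v + s/T) * complex_of_real (std_normal_density s)) \<le> C * std_normal_density s"
      using gb by (auto intro!: always_eventually AE_I2 mult_right_mono simp: norm_mult normal_density_nonneg)
  qed
  then have "((\<lambda>T. LINT s|lebesgue. g (v + s/T) * complex_of_real (std_normal_density s)) \<longlongrightarrow> g v) at_top"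
    using std_normal_int_lebesgue by simp
  then show ?thesis
  proof (rule Lim_transform_eventually)
    show "\<forall>\<^sub>F T in at_top. (LINT s|lebesgue. g (v + s/T) * complex_of_real (std_normal_density s)) = (LINT s|lborel. gt (v + s/T) * complex_of_real (std_normal_density s))"
      using eventually_gt_at_top[of "0::real"] by (rule eventually_mono) (rule eq[symmetric])
  qed
qed
lemma exp_subst:
  fixes F :: "real \<Rightarrow> complex"
  assumes F: "F absolutely_integrable_on {0<..}"
  shows "integrable lebesgue (\<lambda>u. exp u *\<^sub>R F (exp u))"
    and "(LINT u|lebesgue. exp u *\<^sub>R F (exp u)) = (LINT x:{0<..}|lebesgue. F x)"
proof -
  have img: "exp ` UNIV = ({0<..} :: real set)"
    by (auto simp: image_iff) (metis exp_ln)
  have "(\<lambda>x. \<bar>exp x\<bar> *\<^sub>R F (exp x)) absolutely_integrable_on UNIV \<and>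
         integral UNIV (\<lambda>x. \<bar>exp x\<bar> *\<^sub>R F (exp x)) = integral {0<..} F"
    by (subst has_absolute_integral_change_of_variables_real[of UNIV exp exp])
       (auto simp: img F intro!: derivative_eq_intros inj_onI)
  then have 1: "(\<lambda>x. exp x *\<^sub>R F (exp x)) absolutely_integrable_on UNIV"
    and 2: "integral UNIV (\<lambda>x. exp x *\<^sub>R F (exp x)) = integral {0<..} F" by auto
  show "integrable lebesgue (\<lambda>u. exp u *\<^sub>R F (exp u))"
    using 1 by (simp add: set_integrable_def)
  have "(LINT u|lebesgue. exp u *\<^sub>R F (exp u)) = (LINT u:UNIV|lebesgue. exp u *\<^sub>R F (exp u))"
    by (simp add: set_lebesgue_integral_def)
  also have "\<dots> = integral UNIV (\<lambda>x. exp x *\<^sub>R F (exp x))"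
    by (rule set_lebesgue_integral_eq_integral(2)[OF 1])
  also have "\<dots> = (LINT x:{0<..}|lebesgue. F x)"
    unfolding 2 by (rule set_lebesgue_integral_eq_integral(2)[OF F, symmetric])
  finally show "(LINT u|lebesgue. exp u *\<^sub>R F (exp u)) = (LINT x:{0<..}|lebesgue. F x)" .
qed

lemma completion_measurable_AE:
  fixes f l :: "'a \<Rightarrow> 'b::topological_space"
  assumes l: "l \<in> borel_measurable (completion M)" and ae: "AE x in M. f x = l x"
  shows "f \<in> borel_measurable (completion M)"
proof -
  obtain N where N: "{x \<in> space M. \<not> f x = l x} \<subseteq> N" "emeasure M N = 0" "N \<in> sets M"
    using ae by (rule AE_E)
  have Nn: "N \<in> null_sets (completion M)" using N by (auto intro!: null_sets_completionI)
  show ?thesis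
  proof (rule measurableI)
    show "x \<in> space (completion M) \<Longrightarrow> f x \<in> space borel" for x by simp
    fix A :: "'b set" assume A: "A \<in> sets borel"
    have "f -` A \<inter> space (completion M) = ((l -` A \<inter> space (completion M)) - N) \<union> (f -` A \<inter> space (completion M) \<inter> N)"
      using N(1) by auto
    moreover have "l -` A \<inter> space (completion M) \<in> sets (completion M)" using l A by (rule measurable_sets)
    moreover have "f -` A \<inter> space (completion M) \<inter> N \<in> null_sets (completion M)"
      using Nn by (rule null_sets_completion_subset[rotated]) auto
    ultimately show "f -` A \<inter> space (completion M) \<in> sets (completion M)"
      using Nn by (metis (no_types, lifting) null_setsD2 sets.Diff sets.Un)
  qed
qed
theorem lemma10p1:
  fixes f :: "real \<Rightarrow> complex" and \<mu> :: "real measure" and \<sigma> :: real and L :: complex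
  assumes sets_mu: "sets \<mu> = sets borel"
    and mu_pos: "emeasure \<mu> {..0} = 0"
    and loc_int: "\<And>a b. 0 < a \<Longrightarrow> set_integrable lebesgue {a..b} f"
    and f_int: "(\<integral>\<^sup>+ x. ennreal (indicator {0<..} x * (x powr (\<sigma> - 1) * norm (f x))) \<partial>lebesgue) < \<infinity>"
    and mu_int: "(\<integral>\<^sup>+ x. ennreal (indicator {0<..} x * x powr (- \<sigma>)) \<partial>\<mu>) < \<infinity>"
    and line_loc_int: "\<And>A. set_integrable lborel {-A..A} (mellin_line_integrand f \<mu> \<sigma>)"
    and line_conv: "((\<lambda>A. LINT t:{-A..A}|lborel. mellin_line_integrand f \<mu> \<sigma> t) \<longlongrightarrow> L) at_top"
    and bounded: "\<exists>C. \<forall>x>0. norm (complex_of_real (x powr \<sigma>) * f x) \<le> C"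
    and cont_ae: "AE x in \<mu>. isCont f x"
  shows "integrable (completion \<mu>) f \<and>
         integral\<^sup>L (completion \<mu>) f = L / (2 * complex_of_real pi * \<i>)"
proof -
  note [measurable_cong] = sets_mu
  obtain C where Cb: "\<And>x. x > 0 \<Longrightarrow> norm (complex_of_real (x powr \<sigma>) * f x) \<le> C" using bounded by blast
  have C0: "0 \<le> C" using Cb[of 1] norm_ge_zero[of "complex_of_real (1 powr \<sigma>) * f 1"] by linarith
  define p where "p y = indicator {0<..} y * y powr (-\<sigma>)" for y :: real
  have pm[measurable]: "p \<in> borel_measurable borel" unfolding p_def by measurable
  have p0: "0 \<le> p y" for y by (simp add: p_def)
  have pint: "integrable \<mu> p"
  proof (rule integrableI_bounded)
    show "p \<in> borel_measurable \<mu>" by measurable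
    have "(\<integral>\<^sup>+ x. ennreal (norm (p x)) \<partial>\<mu>) = (\<integral>\<^sup>+ x. ennreal (indicator {0<..} x * x powr (- \<sigma>)) \<partial>\<mu>)"
      by (simp add: p_def p0)
    then show "(\<integral>\<^sup>+ x. ennreal (norm (p x)) \<partial>\<mu>) < \<infinity>" using mu_int by simp
  qed
  define \<rho> where "\<rho> = density \<mu> (\<lambda>y. ennreal (p y))"
  have s\<rho>[measurable_cong]: "sets \<rho> = sets borel" unfolding \<rho>_def by (simp add: sets_mu)
  have fin\<rho>: "finite_measure \<rho>"
  proof (rule finite_measureI)
    have "emeasure \<rho> (space \<rho>) = (\<integral>\<^sup>+ x. ennreal (p x) * indicator (space \<mu>) x \<partial>\<mu>)"
      unfolding \<rho>_def by (subst emeasure_density) auto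
    also have "\<dots> = (\<integral>\<^sup>+ x. ennreal (norm (p x)) \<partial>\<mu>)"
      by (intro nn_integral_cong) (simp add: p0)
    also have "\<dots> < \<infinity>" using pint by (simp add: integrable_iff_bounded)
    finally show "emeasure \<rho> (space \<rho>) \<noteq> \<infinity>" by simp
  qed
  interpret \<rho>: finite_measure \<rho> by (rule fin\<rho>)
  have fm: "(\<lambda>x. indicator {0<..} x *\<^sub>R f x) \<in> borel_measurable lebesgue"
  proof (rule borel_measurable_LIMSEQ_metric)
    fix n :: nat
    have "set_integrable lebesgue {1/Suc n..Suc n} f" by (rule loc_int) simp
    then show "(\<lambda>x. indicator {1/Suc n..Suc n} x *\<^sub>R f x) \<in> borel_measurable lebesgue"
      unfolding set_integrable_def by (rule borel_measurable_integrable)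
  next
    fix x :: real
    show "(\<lambda>n. indicator {1/Suc n..Suc n} x *\<^sub>R f x) \<longlonglongrightarrow> indicator {0<..} x *\<^sub>R f x"
    proof (cases "x > 0")
      case False
      have "indicator {1/Suc n..Suc n} x *\<^sub>R f x = indicator {0<..} x *\<^sub>R f x" for n :: nat
      proof -
        have "0 < 1/real (Suc n)" by simp
        then have "x \<notin> {1/real (Suc n)..real (Suc n)}" using False
          by (simp only: atLeastAtMost_iff) linarith
        then show ?thesis using False by (simp add: indicator_def)
      qed
      then have "(\<lambda>n. indicator {1/Suc n..Suc n} x *\<^sub>R f x) = (\<lambda>n. indicator {0<..} x *\<^sub>R f x)" by (rule ext)
      then show ?thesis by (simp only:) (rule tendsto_const)
    next
      case True
      obtain N :: nat where N: "N > x" "N > 1/x" using reals_Archimedean2[of "max x (1/x)"] by auto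
      have "eventually (\<lambda>n. indicator {1/Suc n..Suc n} x *\<^sub>R f x = indicator {0<..} x *\<^sub>R f x) sequentially"
        unfolding eventually_sequentially
      proof (intro exI allI impI)
        fix n assume "N \<le> n"
        then have "real N \<le> real (Suc n)" by simp
        with N True have "1/x < Suc n" "x \<le> Suc n" by linarith+
        then have "1/Suc n \<le> x" using True by (simp add: field_simps)
        then show "indicator {1/Suc n..Suc n} x *\<^sub>R f x = indicator {0<..} x *\<^sub>R f x"
          using True \<open>x \<le> Suc n\<close> by (simp add: indicator_def)
      qed
      then show ?thesis by (rule tendsto_eventually)
    qed
  qed
  define Fm where "Fm t x = complex_of_real (x powr (\<sigma>-1)) * (iexp (t * ln x) * f x)" for t x :: real
  have Fint: "Fm t absolutely_integrable_on {0<..}" for t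
    unfolding set_integrable_def
  proof (rule integrableI_bounded)
    have "(\<lambda>x. indicator {0<..} x *\<^sub>R Fm t x) = (\<lambda>x. (complex_of_real (x powr (\<sigma>-1)) * iexp (t * ln x)) * (indicator {0<..} x *\<^sub>R f x))"
      by (auto simp: Fm_def indicator_def)
    moreover have "(\<lambda>x::real. complex_of_real (x powr (\<sigma>-1)) * iexp (t * ln x)) \<in> borel_measurable lebesgue"
      by (intro measurable_completion) measurable
    ultimately show "(\<lambda>x. indicator {0<..} x *\<^sub>R Fm t x) \<in> borel_measurable lebesgue"
      using fm by (simp only:) (rule borel_measurable_times)
    have "(\<integral>\<^sup>+ x. ennreal (norm (indicator {0<..} x *\<^sub>R Fm t x)) \<partial>lebesgue)
        = (\<integral>\<^sup>+ x. ennreal (indicator {0<..} x * (x powr (\<sigma> - 1) * norm (f x))) \<partial>lebesgue)"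
      by (intro nn_integral_cong) (auto simp: Fm_def indicator_def norm_mult)
    then show "(\<integral>\<^sup>+ x. ennreal (norm (indicator {0<..} x *\<^sub>R Fm t x)) \<partial>lebesgue) < \<infinity>"
      using f_int by simp
  qed
  have cpowr: "complex_of_real x powr (complex_of_real a + \<i> * complex_of_real t) = complex_of_real (x powr a) * iexp (t * ln x)"
    if "x > 0" for x a t :: real
  proof -
    have "complex_of_real (ln x) * (complex_of_real a + \<i> * complex_of_real t) = complex_of_real a * complex_of_real (ln x) + \<i> * (complex_of_real t * complex_of_real (ln x))"
      by (simp add: algebra_simps)
    moreover have "(complex_of_real a + \<i> * complex_of_real t) * complex_of_real (ln x) = complex_of_real a * complex_of_real (ln x) + \<i> * (complex_of_real t * complex_of_real (ln x))"
      by (simp add: algebra_simps)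
    ultimately show ?thesis
      using that by (simp add: powr_def Ln_of_real exp_add flip: exp_of_real)
  qed
  have mellin_eq: "mellin f (complex_of_real \<sigma> + \<i> * complex_of_real t) = (LINT x:{0<..}|lebesgue. Fm t x)" for t
    unfolding mellin_def
  proof (rule set_lebesgue_integral_cong, simp, intro allI impI)
    fix x :: real assume "x \<in> {0<..}"
    then have "complex_of_real x powr (complex_of_real \<sigma> + \<i> * complex_of_real t - 1) = complex_of_real (x powr (\<sigma>-1)) * iexp (t * ln x)"
      using cpowr[of x "\<sigma>-1" t] by (simp add: algebra_simps)
    then show "complex_of_real x powr (complex_of_real \<sigma> + \<i> * complex_of_real t - 1) * f x = Fm t x"
      by (simp add: Fm_def)
  qed
  define g where "g u = complex_of_real (exp (\<sigma> * u)) * f (exp u)" for u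
  have gF: "exp u *\<^sub>R Fm t (exp u) = g u * iexp (t * u)" for t u
  proof -
    have "exp u * exp u powr (\<sigma> - 1) = exp (\<sigma> * u)"
      by (simp add: powr_def flip: exp_add) (simp add: algebra_simps)
    then show ?thesis
      by (simp add: Fm_def g_def scaleR_conv_of_real mult_ac flip: of_real_mult)
  qed
  have gint_t: "integrable lebesgue (\<lambda>u. g u * iexp (t * u))" for t
    using exp_subst(1)[OF Fint[of t]] by (simp add: gF)
  have gmell: "(LINT u|lebesgue. g u * iexp (t * u)) = mellin f (complex_of_real \<sigma> + \<i> * complex_of_real t)" for t
    using exp_subst(2)[OF Fint[of t]] by (simp add: gF mellin_eq)
  have gint: "integrable lebesgue g" using gint_t[of 0] by simp
  have gl[measurable]: "g \<in> borel_measurable lebesgue" using gint by (rule borel_measurable_integrable)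
  have gb: "norm (g u) \<le> C" for u
  proof -
    have "exp (\<sigma> * u) = exp u powr \<sigma>" by (simp add: powr_def mult_ac)
    then show ?thesis using Cb[of "exp u"] by (simp add: g_def)
  qed
  obtain gr where grm: "gr \<in> borel_measurable lborel" and gr: "AE u in lborel. Re (g u) = gr u"
  proof -
    have "(\<lambda>u. Re (g u)) \<in> borel_measurable lebesgue" by measurable
    from completion_ex_borel_measurable_real[OF this] show ?thesis using that by auto
  qed
  obtain gim where gimm: "gim \<in> borel_measurable lborel" and gim: "AE u in lborel. Im (g u) = gim u"
  proof -
    have "(\<lambda>u. Im (g u)) \<in> borel_measurable lebesgue" by measurable
    from completion_ex_borel_measurable_real[OF this] show ?thesis using that by auto
  qed
  define gt0 where "gt0 u = complex_of_real (gr u) + \<i> * complex_of_real (gim u)" for u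
  define gt where "gt u = (if norm (gt0 u) \<le> C then gt0 u else 0)" for u
  have gtm[measurable]: "gt \<in> borel_measurable borel"
    using grm gimm unfolding gt_def gt0_def by simp
  have gtb: "norm (gt u) \<le> C" for u using C0 by (simp add: gt_def)
  have ae0: "AE u in lborel. gt u = g u"
    using gr gim
  proof eventually_elim
    case (elim u)
    then have "gt0 u = g u" by (simp add: gt0_def complex_eq_iff)
    then show ?case using gb[of u] by (simp add: gt_def)
  qed
  have aeL: "AE u in lebesgue. gt u = g u" using ae0 by (rule AE_completion)
  have gtL: "gt \<in> borel_measurable lebesgue" by (intro measurable_completion) simp
  have gtint: "integrable lborel gt"
  proof -
    have "integrable lebesgue gt"
      by (rule integrable_cong_AE_imp[OF gint gtL]) (use aeL in \<open>auto elim: AE_mp\<close>)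
    then show ?thesis by (subst (asm) integrable_completion) simp_all
  qed
  define Gh where "Gh t = (LINT u|lborel. gt u * iexp (t * u))" for t
  define mh where "mh t = (LINT y|\<rho>. iexp (-(t * ln y)))" for t
  have Gh_eq: "Gh t = mellin f (complex_of_real \<sigma> + \<i> * complex_of_real t)" for t
  proof -
    have "Gh t = (LINT u|lebesgue. gt u * iexp (t * u))"
      unfolding Gh_def by (rule integral_completion[symmetric]) simp
    also have "\<dots> = (LINT u|lebesgue. g u * iexp (t * u))"
    proof (rule integral_cong_AE)
      show "(\<lambda>u. gt u * iexp (t * u)) \<in> borel_measurable lebesgue"
        using gtL by (rule borel_measurable_times) (intro measurable_completion, simp)
      show "(\<lambda>u. g u * iexp (t * u)) \<in> borel_measurable lebesgue"
        using gint_t by (rule borel_measurable_integrable)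
      show "AE u in lebesgue. gt u * iexp (t * u) = g u * iexp (t * u)"
        using aeL by eventually_elim simp
    qed
    also have "\<dots> = mellin f (complex_of_real \<sigma> + \<i> * complex_of_real t)" by (rule gmell)
    finally show ?thesis .
  qed
  have mh_eq: "mh t = mellin_measure \<mu> (1 - (complex_of_real \<sigma> + \<i> * complex_of_real t))" for t
  proof -
    have "mellin_measure \<mu> (1 - (complex_of_real \<sigma> + \<i> * complex_of_real t))
        = (LINT y:{0<..}|\<mu>. complex_of_real (y powr (-\<sigma>)) * iexp ((-t) * ln y))"
      unfolding mellin_measure_def
    proof (rule set_lebesgue_integral_cong, simp add: sets_mu, intro allI impI)
      fix y :: real assume "y \<in> {0<..}"
      then show "complex_of_real y powr (1 - (complex_of_real \<sigma> + \<i> * complex_of_real t) - 1) = complex_of_real (y powr (-\<sigma>)) * iexp ((-t) * ln y)"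
        using cpowr[of y "-\<sigma>" "-t"] by (simp add: algebra_simps)
    qed
    also have "\<dots> = (LINT y|\<mu>. p y *\<^sub>R iexp (-(t * ln y)))"
      unfolding set_lebesgue_integral_def
      by (intro Bochner_Integration.integral_cong refl) (auto simp: p_def indicator_def scaleR_conv_of_real)
    also have "\<dots> = mh t"
      unfolding mh_def \<rho>_def by (rule integral_density[symmetric]) (auto simp: p0)
    finally show ?thesis ..
  qed
  define h where "h = mellin_line_integrand f \<mu> \<sigma>"
  have h_eq: "h t = \<i> * (Gh t * mh t)" for t
    unfolding h_def mellin_line_integrand_def Gh_eq mh_eq ..
  have Ghm[measurable]: "Gh \<in> borel_measurable borel"
    unfolding Gh_def by (rule lborel.borel_measurable_lebesgue_integral) simp
  have mhm[measurable]: "mh \<in> borel_measurable borel"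
    unfolding mh_def by (rule \<rho>.borel_measurable_lebesgue_integral) simp
  define N where "N = (LINT u|lborel. norm (gt u))"
  have GhN: "norm (Gh t) \<le> N" for t
  proof -
    have "norm (Gh t) \<le> (LINT u|lborel. norm (gt u * iexp (t * u)))"
      unfolding Gh_def by (rule integral_norm_bound)
    also have "\<dots> = N" unfolding N_def by (simp add: norm_mult)
    finally show ?thesis .
  qed
  have N0: "0 \<le> N" unfolding N_def by simp
  have mhb: "norm (mh t) \<le> measure \<rho> (space \<rho>)" for t
  proof -
    have "norm (mh t) \<le> (LINT y|\<rho>. norm (iexp (-(t * ln y))))"
      unfolding mh_def by (rule integral_norm_bound)
    also have "\<dots> = measure \<rho> (space \<rho>)" by (simp add: norm_exp_i_times)
    finally show ?thesis .
  qed
  have hb: "norm (h t) \<le> N * measure \<rho> (space \<rho>)" for t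
    unfolding h_eq using GhN[of t] mhb[of t] by (simp add: norm_mult mult_mono N0)
  have hm: "h \<in> borel_measurable borel"
  proof -
    have "h = (\<lambda>t. \<i> * (Gh t * mh t))" using h_eq by (rule ext)
    then show ?thesis by simp
  qed
  have abel_res: "((\<lambda>T. LINT t|lborel. exp (-((t/T)^2)/2) *\<^sub>R h t) \<longlongrightarrow> L) at_top"
    by (rule abel[OF hm hb]) (use line_conv in \<open>simp add: h_def\<close>)
  define K where "K T = (LINT y|\<rho>. LINT s|lborel. gt (ln y + s/T) * complex_of_real (std_normal_density s))" for T
  have fubT: "(LINT t|lborel. exp (-((t/T)^2)/2) *\<^sub>R h t) = \<i> * (complex_of_real (2*pi) * K T)" if T: "T > 0" for T
  proof -
    have "(LINT t|lborel. exp (-((t/T)^2)/2) *\<^sub>R h t) = (LINT t|lborel. \<i> * (exp (-((t/T)^2)/2) *\<^sub>R (Gh t * mh t)))"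
      unfolding h_eq by (simp add: scaleR_conv_of_real mult_ac)
    also have "\<dots> = \<i> * (LINT t|lborel. exp (-((t/T)^2)/2) *\<^sub>R (Gh t * mh t))"
      by (rule integral_mult_right_zero)
    also have "(LINT t|lborel. exp (-((t/T)^2)/2) *\<^sub>R (Gh t * mh t)) = complex_of_real (2*pi) * K T"
      unfolding Gh_def mh_def K_def by (rule fub2[OF gtm gtint T s\<rho> fin\<rho>]) simp
    finally show ?thesis .
  qed
  define Gs where "Gs T v = (LINT s|lborel. gt (v + s/T) * complex_of_real (std_normal_density s))" for T v
  have Gsm[measurable]: "Gs T \<in> borel_measurable borel" for T
    unfolding Gs_def by (rule lborel.borel_measurable_lebesgue_integral) simp
  have Gsb: "norm (Gs T v) \<le> C" for T v
    unfolding Gs_def by (rule kern_bound(2)[OF gtm gtb])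
  define S where "S T y = p y *\<^sub>R Gs T (ln y)" for T y
  have Sm: "S T \<in> borel_measurable (completion \<mu>)" for T
    unfolding S_def by (intro measurable_completion) simp
  have K_eq: "K T = (LINT y|completion \<mu>. S T y)" for T
  proof -
    have "K T = (LINT y|\<rho>. Gs T (ln y))" unfolding K_def Gs_def ..
    also have "\<dots> = (LINT y|\<mu>. S T y)"
      unfolding \<rho>_def S_def by (rule integral_density) (auto simp: p0)
    also have "\<dots> = (LINT y|completion \<mu>. S T y)"
      by (rule integral_completion[symmetric]) (simp add: S_def)
    finally show ?thesis .
  qed
  have aepos: "AE y in \<mu>. y > 0"
  proof -
    have "{..0} \<in> null_sets \<mu>" using mu_pos sets_mu by (simp add: null_sets_def)
    then show ?thesis by (rule AE_not_in[THEN AE_mp]) (auto intro!: AE_I2)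
  qed
  have conv: "AE y in \<mu>. ((\<lambda>T. S T y) \<longlongrightarrow> f y) at_top"
    using aepos cont_ae
  proof eventually_elim
    case (elim y)
    have "isCont (\<lambda>u. f (exp u)) (ln y)"
      by (rule isCont_o2[where f=exp and g=f]) (use elim in auto)
    then have "isCont g (ln y)" unfolding g_def by (intro continuous_intros)
    then have "((\<lambda>T. Gs T (ln y)) \<longlongrightarrow> g (ln y)) at_top"
      unfolding Gs_def by (rule approx_id[OF gl gtm aeL gb gtb])
    then have "((\<lambda>T. S T y) \<longlongrightarrow> p y *\<^sub>R g (ln y)) at_top"
      unfolding S_def by (intro tendsto_scaleR tendsto_const)
    moreover have "p y *\<^sub>R g (ln y) = f y"
    proof -
      have "y powr (-\<sigma>) * exp (\<sigma> * ln y) = 1"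
        using elim by (simp add: powr_def flip: exp_add)
      then have e: "complex_of_real (y powr (-\<sigma>)) * complex_of_real (exp (\<sigma> * ln y)) = 1"
        by (simp flip: of_real_mult)
      have "p y *\<^sub>R g (ln y) = (complex_of_real (y powr (-\<sigma>)) * complex_of_real (exp (\<sigma> * ln y))) * f y"
        using elim by (simp add: p_def g_def scaleR_conv_of_real mult.assoc)
      then show ?thesis unfolding e by simp
    qed
    ultimately show ?case by simp
  qed
  have fmeas: "f \<in> borel_measurable (completion \<mu>)"
  proof (rule completion_measurable_AE)
    show "(\<lambda>y. lim (\<lambda>n. S (real n) y)) \<in> borel_measurable (completion \<mu>)"
      using Sm by (rule borel_measurable_lim_metric)
    show "AE y in \<mu>. f y = lim (\<lambda>n. S (real n) y)"
      using conv
    proof eventually_elim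
      case (elim y)
      have "(\<lambda>n. S (real n) y) \<longlonglongrightarrow> f y"
        using elim by (rule filterlim_compose) (rule filterlim_real_sequentially)
      then show ?case by (simp add: limI)
    qed
  qed
  have pC: "integrable (completion \<mu>) (\<lambda>y. p y * C)"
    using pint by (subst integrable_completion) (auto intro: integrable_mult_left)
  have Sbound: "\<forall>\<^sub>F T in at_top. AE y in completion \<mu>. norm (S T y) \<le> p y * C"
    by (intro always_eventually allI AE_I2) (simp add: S_def p0 mult_left_mono Gsb)
  have conv': "AE y in completion \<mu>. ((\<lambda>T. S T y) \<longlongrightarrow> f y) at_top"
    using conv by (rule AE_completion)
  have fint: "integrable (completion \<mu>) f"
    by (rule integrable_dominated_convergence_at_top[OF fmeas Sm pC conv' Sbound])
  have KL: "((\<lambda>T. LINT y|completion \<mu>. S T y) \<longlongrightarrow> integral\<^sup>L (completion \<mu>) f) at_top"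
    by (rule integral_dominated_convergence_at_top[OF fmeas Sm pC conv' Sbound])
  have "((\<lambda>T. LINT t|lborel. exp (-((t/T)^2)/2) *\<^sub>R h t) \<longlongrightarrow> \<i> * (complex_of_real (2*pi) * integral\<^sup>L (completion \<mu>) f)) at_top"
  proof (rule Lim_transform_eventually)
    show "((\<lambda>T. \<i> * (complex_of_real (2*pi) * K T)) \<longlongrightarrow> \<i> * (complex_of_real (2*pi) * integral\<^sup>L (completion \<mu>) f)) at_top"
      unfolding K_eq by (intro tendsto_mult_left KL)
    show "\<forall>\<^sub>F T in at_top. \<i> * (complex_of_real (2*pi) * K T) = (LINT t|lborel. exp (-((t/T)^2)/2) *\<^sub>R h t)"
      using eventually_gt_at_top[of "0::real"] by (rule eventually_mono) (rule fubT[symmetric])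
  qed
  note lim2 = this
  have "L = \<i> * (complex_of_real (2*pi) * integral\<^sup>L (completion \<mu>) f)"
    using tendsto_unique[OF _ abel_res lim2] by simp
  then have "integral\<^sup>L (completion \<mu>) f = L / (2 * complex_of_real pi * \<i>)"
    by (simp add: field_simps)
  with fint show ?thesis by simp
qed
end
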